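(* Let $G=(V,E)$ be a graph, $v\in V$, and $F$ a set of $k$ new edges (pairs not in $E$), with $\bar G=(V,E\cup F)$. Then $$LCC_{\bar G}(v)\le \overline{LCC}(v,k):=\max_{k_1+k_2=k}\ \frac{n_v+k_2+k_1\, d_G(v)+\binom{k_1}{2}}{\binom{d_G(v)+k_1}{2}},$$ where the maximum is over nonnegative integers $k_1,k_2$ with $k_1+k_2=k$, and $n_v=LCC_G(v)\binom{d_G(v)}{2}$ is the number of edges of $G$ between neighbors of $v$.
   Context: $G=(V,E)$ is a simple undirected graph; $N_G(v)$ is the neighbor set and $d_G(v)=|N_G(v)|$ the degree of $v$; $LCC_G(v)=\frac{|\{(i,j): i,j\in N_G(v),\ (i,j)\in E\}|}{\binom{d_G(v)}{2}}$ is the local clustering coefficient. *)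

theory Defs
  imports Complex_Main
begin

definition all_pairs :: "'a set \<Rightarrow> 'a set set" where
  "all_pairs V = {{x, y} | x y. x \<in> V \<and> y \<in> V \<and> x \<noteq> y}"

definition simple_graph :: "'a set \<Rightarrow> 'a set set \<Rightarrow> bool" where
  "simple_graph V E \<longleftrightarrow> finite V \<and> E \<subseteq> all_pairs V"

definition neighbors :: "'a set set \<Rightarrow> 'a \<Rightarrow> 'a set" where
  "neighbors E v = {u. {u, v} \<in> E}"

definition degree :: "'a set set \<Rightarrow> 'a \<Rightarrow> nat" where
  "degree E v = card (neighbors E v)"

definition nbr_edges :: "'a set set \<Rightarrow> 'a \<Rightarrow> nat" where
  "nbr_edges E v = card {e \<in> E. e \<subseteq> neighbors E v}"

text \<open>Local clustering coefficient; by Isabelle's convention x/0 = 0 it is 0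
  when the degree is below 2.\<close>
definition LCC :: "'a set set \<Rightarrow> 'a \<Rightarrow> real" where
  "LCC E v = real (nbr_edges E v) / real (degree E v choose 2)"

definition LCC_bar :: "'a set set \<Rightarrow> 'a \<Rightarrow> nat \<Rightarrow> real" where
  "LCC_bar E v k =
     (let d = degree E v; n_v = LCC E v * real (d choose 2) in
      Max ((\<lambda>k1. let k2 = k - k1 in
               (n_v + real k2 + real k1 * real d + real (k1 choose 2))
               / real ((d + k1) choose 2)) ` {0..k}))"

end

theory Submission
  imports Defs
begin

lemma choose2_add: "(d + m choose 2) = (d choose 2) + m * d + (m choose 2)"
proof (induction m)
  case 0 then show ?case by simp
next
  case (Suc m)
  have "(Suc (d + m) choose 2) = (d + m choose 2) + (d + m)"
    by (simp add: numeral_2_eq_2)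
  moreover have "(Suc m choose 2) = (m choose 2) + m"
    by (simp add: numeral_2_eq_2)
  ultimately show ?case using Suc by simp
qed

lemma all_pairs_card: "e \<in> all_pairs V \<Longrightarrow> card e = 2"
  unfolding all_pairs_def by auto

lemma all_pairs_sub: "e \<in> all_pairs V \<Longrightarrow> e \<subseteq> V"
  unfolding all_pairs_def by auto

theorem theorem3:
  fixes V :: "'a set" and E F :: "'a set set" and v :: 'a and k :: nat
  assumes "simple_graph V E"
    and "v \<in> V"
    and "F \<subseteq> all_pairs V"
    and "F \<inter> E = {}"
    and "card F = k"
  shows "LCC (E \<union> F) v \<le> LCC_bar E v k"
proof -
  have finV: "finite V" and EV: "E \<subseteq> all_pairs V" using assms(1) unfolding simple_graph_def by auto
  have FV: "F \<subseteq> all_pairs V" by fact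
  have "all_pairs V \<subseteq> Pow V" using all_pairs_sub by blast
  then have "F \<subseteq> Pow V" using FV by blast
  moreover have "finite (Pow V)" using finV by simp
  ultimately have finF: "finite F" by (rule finite_subset)
  define N where "N = neighbors E v"
  define K where "K = neighbors F v"
  define d where "d = card N"
  define k1 where "k1 = card K"
  define n where "n = nbr_edges E v"
  have NV: "N \<subseteq> V" unfolding N_def neighbors_def using EV all_pairs_sub by blast
  have KV: "K \<subseteq> V" unfolding K_def neighbors_def using FV all_pairs_sub by blast
  have finN: "finite N" using NV finV by (rule finite_subset)
  have finK: "finite K" using KV finV by (rule finite_subset)
  have vN: "v \<notin> N"
  proof
    assume "v \<in> N" then have "{v, v} \<in> E" unfolding N_def neighbors_def by simp
    then have "card {v, v} = 2" using EV all_pairs_card by blast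
    then show False by simp
  qed
  have NK: "N \<inter> K = {}" unfolding N_def K_def neighbors_def using assms(4) by auto
  have nbU: "neighbors (E \<union> F) v = N \<union> K" unfolding N_def K_def neighbors_def by auto
  have degU: "degree (E \<union> F) v = d + k1"
    unfolding degree_def nbU d_def k1_def using card_Un_disjoint[OF finN finK NK] .
  have inj: "inj_on (\<lambda>u. {u, v}) K"
    unfolding inj_on_def by (auto simp: doubleton_eq_iff)
  have imgF: "(\<lambda>u. {u, v}) ` K \<subseteq> F" unfolding K_def neighbors_def by auto
  have cimg: "card ((\<lambda>u. {u, v}) ` K) = k1" using card_image[OF inj] k1_def by simp
  have k1k: "k1 \<le> k" using card_mono[OF finF imgF] cimg assms(5) by simp
  define P where "P S = {B. B \<subseteq> S \<and> card B = (2::nat)}" for S :: "'a set"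
  have cP: "finite S \<Longrightarrow> card (P S) = card S choose 2" for S
    unfolding P_def using n_subsets by blast
  have finP: "finite (P S)" if "finite S" for S
  proof -
    have "P S \<subseteq> Pow S" unfolding P_def by blast
    moreover have "finite (Pow S)" using that by simp
    ultimately show ?thesis by (rule finite_subset)
  qed
  have nle: "n \<le> d choose 2"
  proof -
    have "{e \<in> E. e \<subseteq> neighbors E v} \<subseteq> P N" unfolding P_def N_def using EV all_pairs_card by blast
    then show ?thesis unfolding n_def nbr_edges_def d_def using card_mono[OF finP[OF finN]] cP[OF finN] by simp
  qed
  have nv: "LCC E v * real (degree E v choose 2) = real n"
  proof (cases "d choose 2 = 0")
    case True then have "n = 0" using nle by linarith
    then show ?thesis using True unfolding LCC_def n_def d_def N_def degree_def by simp
  next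
    case False then show ?thesis unfolding LCC_def n_def d_def N_def degree_def by simp
  qed
  define A where "A = {e \<in> E. e \<subseteq> N}"
  define B where "B = {e \<in> F. e \<subseteq> N}"
  define C where "C = P (N \<union> K) - P N"
  have sub: "{e \<in> E \<union> F. e \<subseteq> N \<union> K} \<subseteq> A \<union> B \<union> C"
  proof
    fix e assume e: "e \<in> {e \<in> E \<union> F. e \<subseteq> N \<union> K}"
    then have "card e = 2" using EV FV all_pairs_card by blast
    then show "e \<in> A \<union> B \<union> C" using e unfolding A_def B_def C_def P_def by auto
  qed
  have "A \<subseteq> P N" unfolding A_def P_def using EV all_pairs_card by blast
  then have finA: "finite A" using finP[OF finN] by (rule finite_subset)
  have finB: "finite B" unfolding B_def using finF by simp
  have finC: "finite C" unfolding C_def using finP finN finK by simp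
  have cA: "card A = n" unfolding A_def n_def nbr_edges_def N_def by simp
  have BF: "B \<subseteq> F - (\<lambda>u. {u, v}) ` K" unfolding B_def using vN by auto
  have cB: "card B \<le> k - k1"
  proof -
    have "card B \<le> card (F - (\<lambda>u. {u, v}) ` K)" using card_mono[OF _ BF] finF by simp
    also have "\<dots> = card F - card ((\<lambda>u. {u, v}) ` K)"
      using card_Diff_subset[OF _ imgF] finF finite_subset[OF imgF] by blast
    finally show ?thesis using cimg assms(5) by simp
  qed
  have cC: "card C = k1 * d + (k1 choose 2)"
  proof -
    have "P N \<subseteq> P (N \<union> K)" unfolding P_def by auto
    then have "card C = card (P (N \<union> K)) - card (P N)"
      unfolding C_def using card_Diff_subset finP finN by blast
    also have "\<dots> = ((d + k1) choose 2) - (d choose 2)"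
      using cP finN finK card_Un_disjoint[OF finN finK NK] d_def k1_def by simp
    also have "\<dots> = k1 * d + (k1 choose 2)" using choose2_add[of d k1] by simp
    finally show ?thesis .
  qed
  have cnt: "nbr_edges (E \<union> F) v \<le> n + (k - k1) + k1 * d + (k1 choose 2)"
  proof -
    have "nbr_edges (E \<union> F) v \<le> card (A \<union> B \<union> C)"
      unfolding nbr_edges_def nbU using card_mono[OF _ sub] finA finB finC by simp
    also have "\<dots> \<le> card A + card B + card C"
      using card_Un_le[of "A \<union> B" C] card_Un_le[of A B] by linarith
    finally show ?thesis using cA cB cC by linarith
  qed
  define f where "f k1' = (let k2 = k - k1' in
               (LCC E v * real (degree E v choose 2) + real k2 + real k1' * real (degree E v) + real (k1' choose 2))
               / real ((degree E v + k1') choose 2))" for k1'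
  have bar: "LCC_bar E v k = Max (f ` {0..k})"
    unfolding LCC_bar_def f_def by (simp add: Let_def)
  have dd: "degree E v = d" unfolding degree_def d_def N_def by simp
  have "LCC (E \<union> F) v \<le> f k1"
  proof -
    have "LCC (E \<union> F) v = real (nbr_edges (E \<union> F) v) / real ((d + k1) choose 2)"
      unfolding LCC_def degU ..
    also have "\<dots> \<le> real (n + (k - k1) + k1 * d + (k1 choose 2)) / real ((d + k1) choose 2)"
      using cnt by (intro divide_right_mono) (simp only: of_nat_le_iff, simp)
    also have "\<dots> = f k1" using nv unfolding f_def Let_def dd by (simp add: algebra_simps)
    finally show ?thesis .
  qed
  also have "f k1 \<le> Max (f ` {0..k})" using k1k by (intro Max_ge) auto
  finally show ?thesis using bar by simp
qed

end
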